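(* Let $\sigma>0$ and $h:[0,\sigma)\to\mathbb{R}^+$ be continuous, strictly increasing, with $\lim_{s\to\sigma^-}h(s)=+\infty$, and suppose there exists $\gamma\in[1,2)$ with $\lim_{s\to\sigma^-}(\sigma-s)^\gamma h(s)=C>0$. Let $H(s)=\int_0^s h(t)\,dt$, $\psi(s)=\int_0^s e^{-H(t)}\,dt$ for $s\in[0,\sigma]$, $L=\psi(\sigma)$ (so $\psi:[0,\sigma]\to[0,L]$ is increasing and invertible), and $g(s)=e^{-H(\psi^{-1}(s))}$ for $s\in[0,L]$ (with $g(L)=0$). Then: (i) $g(0)=1$ and $g(L)=0$; (ii) $g$ is decreasing; (iii) $\lim_{s\to L^-}g'(s)=-\infty$; (iv) $\displaystyle\int_0^L\frac{dt}{\sqrt{\int_t^L g(s)\,ds}}<+\infty.$ *)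

theory Defs
  imports "HOL-Analysis.Analysis"
begin

definition bigH :: "(real \<Rightarrow> real) \<Rightarrow> real \<Rightarrow> real" where
  "bigH h s = integral {0..s} h"

definition psi :: "(real \<Rightarrow> real) \<Rightarrow> real \<Rightarrow> real" where
  "psi h s = integral {0..s} (\<lambda>t. exp (- bigH h t))"

definition bigL :: "(real \<Rightarrow> real) \<Rightarrow> real \<Rightarrow> real" where
  "bigL h \<sigma> = psi h \<sigma>"

definition gfun :: "(real \<Rightarrow> real) \<Rightarrow> real \<Rightarrow> real \<Rightarrow> real" where
  "gfun h \<sigma> s = (if s = bigL h \<sigma> then 0
                   else exp (- bigH h (the_inv_into {0..\<sigma>} (psi h) s)))"

end

theory Submission
  imports Defs
begin


locale lemctx =
  fixes h :: "real \<Rightarrow> real" and \<sigma> :: real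
  assumes sigma_pos: "\<sigma> > 0"
    and h_cont: "continuous_on {0..<\<sigma>} h"
    and h_pos: "\<forall>s\<in>{0..<\<sigma>}. h s > 0"
    and h_mono: "strict_mono_on {0..<\<sigma>} h"
begin

lemma h_le: "0 \<le> a \<Longrightarrow> a \<le> b \<Longrightarrow> b < \<sigma> \<Longrightarrow> h a \<le> h b"
  using h_mono by (cases "a = b") (auto simp: strict_mono_on_def less_imp_le)

lemma h_cont_sub: "0 \<le> a \<Longrightarrow> b < \<sigma> \<Longrightarrow> continuous_on {a..b} h"
  by (rule continuous_on_subset[OF h_cont]) auto

lemma h_pos': "0 \<le> s \<Longrightarrow> s < \<sigma> \<Longrightarrow> h s > 0"
  using h_pos by auto

lemma h_int: "0 \<le> a \<Longrightarrow> b < \<sigma> \<Longrightarrow> h integrable_on {a..b}"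
  using h_cont_sub integrable_continuous_real by blast

lemma H0: "bigH h 0 = 0"
  by (simp add: bigH_def)

lemma H_split: assumes "0 \<le> a" "a \<le> b" "b < \<sigma>"
  shows "bigH h b = bigH h a + integral {a..b} h"
  unfolding bigH_def using Henstock_Kurzweil_Integration.integral_combine[where f=h and a=0 and c=a and b=b] h_int[of 0 b] assms by auto

lemma H_incr: assumes "0 \<le> a" "a \<le> b" "b < \<sigma>"
  shows "bigH h a \<le> bigH h b" "bigH h b - bigH h a \<le> (b - a) * h b"
proof -
  have i: "h integrable_on {a..b}" using h_int assms by auto
  have "integral {a..b} h \<ge> 0"
    by (rule integral_nonneg[OF i]) (use h_pos' assms in \<open>auto intro: less_imp_le\<close>)
  then show "bigH h a \<le> bigH h b" using H_split[OF assms] by simp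
  have "integral {a..b} h \<le> integral {a..b} (\<lambda>x. h b)"
    by (rule integral_le[OF i]) (use h_le assms in auto)
  then show "bigH h b - bigH h a \<le> (b - a) * h b" using H_split[OF assms] assms by simp
qed

lemma H_nonneg: "0 \<le> a \<Longrightarrow> a < \<sigma> \<Longrightarrow> bigH h a \<ge> 0"
  using H_incr(1)[of 0 a] H0 by auto

lemma H_cont: "0 \<le> b \<Longrightarrow> b < \<sigma> \<Longrightarrow> continuous_on {0..b} (bigH h)"
  unfolding bigH_def[abs_def] by (rule indefinite_integral_continuous_1[OF h_int]) auto

lemma H_deriv: assumes "0 < s" "s < \<sigma>" shows "(bigH h has_real_derivative h s) (at s)"
proof -
  define b where "b = (s + \<sigma>) / 2"
  have "((\<lambda>x. integral {0..x} h) has_real_derivative h s) (at s within {0..b})"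
    by (rule integral_has_real_derivative[OF h_cont_sub]) (use assms b_def in auto)
  moreover have "at s within {0..b} = at s" by (rule at_within_Icc_at) (use assms b_def in auto)
  ultimately show ?thesis unfolding bigH_def[abs_def] by simp
qed

lemma e_cont: "0 \<le> b \<Longrightarrow> b < \<sigma> \<Longrightarrow> continuous_on {0..b} (\<lambda>t. exp (- bigH h t))"
  using H_cont[of b] by (auto intro!: continuous_intros)

lemma e_int: "0 \<le> a \<Longrightarrow> b < \<sigma> \<Longrightarrow> (\<lambda>t. exp (- bigH h t)) integrable_on {a..b}"
proof (cases "a \<le> b")
  case True
  assume "0 \<le> a" "b < \<sigma>"
  then have "continuous_on {a..b} (\<lambda>t. exp (- bigH h t))"
    using e_cont[of b] True by (auto intro: continuous_on_subset)
  then show ?thesis using integrable_continuous_real by blast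
qed auto

lemma e_isCont: "0 < t \<Longrightarrow> t < \<sigma> \<Longrightarrow> isCont (\<lambda>t. exp (- bigH h t)) t"
proof -
  assume "0 < t" "t < \<sigma>"
  then have "isCont (bigH h) t" using H_deriv[of t] DERIV_isCont by blast
  then have "isCont (\<lambda>t. - bigH h t) t" by (rule isCont_minus)
  then show ?thesis using isCont_o2[OF _ isCont_exp] by blast
qed

lemma e_int_full: "(\<lambda>t. exp (- bigH h t)) integrable_on {0..\<sigma>}"
proof -
  have "(\<lambda>t. exp (- bigH h t)) integrable_on {0<..<\<sigma>}"
  proof (rule measurable_bounded_by_integrable_imp_integrable_real)
    show "(\<lambda>t. exp (- bigH h t)) \<in> borel_measurable (lebesgue_on {0<..<\<sigma>})"
      by (rule continuous_imp_measurable_on_sets_lebesgue)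
         (auto intro!: continuous_at_imp_continuous_on e_isCont)
    show "(\<lambda>t. 1::real) integrable_on {0<..<\<sigma>}"
      using integrable_on_open_interval_real by blast
    show "\<bar>exp (- bigH h x)\<bar> \<le> 1" if "x \<in> {0<..<\<sigma>}" for x
      using H_nonneg[of x] that by auto
  qed auto
  then show ?thesis using integrable_on_open_interval_real by blast
qed

lemma e_int_sub: "0 \<le> a \<Longrightarrow> b \<le> \<sigma> \<Longrightarrow> (\<lambda>t. exp (- bigH h t)) integrable_on {a..b}"
  by (rule integrable_on_subinterval[OF e_int_full]) auto

lemma psi_diff: assumes "0 \<le> a" "a \<le> b" "b \<le> \<sigma>"
  shows "psi h b - psi h a = integral {a..b} (\<lambda>t. exp (- bigH h t))"
  unfolding psi_def
  using Henstock_Kurzweil_Integration.integral_combine[where f="\<lambda>t. exp (- bigH h t)" and a=0 and c=a and b=b]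
    e_int_sub[of 0 b] assms by auto

lemma psi0: "psi h 0 = 0" by (simp add: psi_def)

lemma psi_mono: assumes "0 \<le> a" "a \<le> b" "b \<le> \<sigma>" shows "psi h a \<le> psi h b"
proof -
  have "integral {a..b} (\<lambda>t. exp (- bigH h t)) \<ge> 0"
    by (rule integral_nonneg) (use e_int_sub assms in auto)
  then show ?thesis using psi_diff[OF assms] by simp
qed

lemma psi_lower: assumes "0 \<le> a" "a \<le> b" "b < \<sigma>"
  shows "psi h b - psi h a \<ge> (b - a) * exp (- bigH h b)"
proof -
  have "integral {a..b} (\<lambda>t. exp (- bigH h b)) \<le> integral {a..b} (\<lambda>t. exp (- bigH h t))"
    by (rule integral_le) (use e_int_sub assms H_incr(1)[of _ b] in auto)
  then show ?thesis using psi_diff[of a b] assms by simp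
qed

lemma psi_strict: assumes "0 \<le> a" "a < b" "b \<le> \<sigma>" shows "psi h a < psi h b"
proof -
  define c where "c = (a + b) / 2"
  have "psi h c - psi h a \<ge> (c - a) * exp (- bigH h c)"
    by (rule psi_lower) (use assms c_def in auto)
  moreover have "(c - a) * exp (- bigH h c) > 0" using assms c_def by auto
  moreover have "psi h c \<le> psi h b" by (rule psi_mono) (use assms c_def in auto)
  ultimately show ?thesis by linarith
qed

lemma L_pos: "bigL h \<sigma> > 0"
  unfolding bigL_def using psi_strict[of 0 \<sigma>] sigma_pos psi0 by auto

lemma psi_cont: "continuous_on {0..\<sigma>} (psi h)"
  unfolding psi_def[abs_def] by (rule indefinite_integral_continuous_1[OF e_int_full])

lemma psi_deriv: assumes "0 < s" "s < \<sigma>"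
  shows "(psi h has_real_derivative exp (- bigH h s)) (at s)"
proof -
  define b where "b = (s + \<sigma>) / 2"
  have "((\<lambda>x. integral {0..x} (\<lambda>t. exp (- bigH h t))) has_real_derivative exp (- bigH h s)) (at s within {0..b})"
    by (rule integral_has_real_derivative[OF e_cont]) (use assms b_def in auto)
  moreover have "at s within {0..b} = at s" by (rule at_within_Icc_at) (use assms b_def in auto)
  ultimately show ?thesis unfolding psi_def[abs_def] by simp
qed

lemma psi_inj: "inj_on (psi h) {0..\<sigma>}"
proof (rule inj_onI)
  fix x y assume "x \<in> {0..\<sigma>}" "y \<in> {0..\<sigma>}" "psi h x = psi h y"
  then show "x = y" using psi_strict[of x y] psi_strict[of y x]
    by (cases x y rule: linorder_cases) auto
qed

lemma psi_image: "psi h ` {0..\<sigma>} = {0..bigL h \<sigma>}"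
proof
  show "psi h ` {0..\<sigma>} \<subseteq> {0..bigL h \<sigma>}"
    using psi_mono[of 0] psi_mono[of _ \<sigma>] psi0 unfolding bigL_def by auto
  show "{0..bigL h \<sigma>} \<subseteq> psi h ` {0..\<sigma>}"
  proof
    fix y assume "y \<in> {0..bigL h \<sigma>}"
    then obtain x where "0 \<le> x" "x \<le> \<sigma>" "psi h x = y"
      using IVT'[of "psi h" 0 y \<sigma>] psi_cont psi0 sigma_pos unfolding bigL_def by auto
    then show "y \<in> psi h ` {0..\<sigma>}" by auto
  qed
qed

abbreviation "pinv \<equiv> the_inv_into {0..\<sigma>} (psi h)"

lemma pinv_psi: "v \<in> {0..\<sigma>} \<Longrightarrow> pinv (psi h v) = v"
  by (rule the_inv_into_f_f[OF psi_inj])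

lemma psi_pinv: "s \<in> {0..bigL h \<sigma>} \<Longrightarrow> psi h (pinv s) = s"
  by (rule f_the_inv_into_f[OF psi_inj]) (simp add: psi_image)

lemma pinv_in: "s \<in> {0..bigL h \<sigma>} \<Longrightarrow> pinv s \<in> {0..\<sigma>}"
  by (rule the_inv_into_into[OF psi_inj]) (auto simp: psi_image)

lemma pinv_L: "pinv (bigL h \<sigma>) = \<sigma>"
  unfolding bigL_def using pinv_psi[of \<sigma>] sigma_pos by auto

lemma pinv_0: "pinv 0 = 0"
  using pinv_psi[of 0] sigma_pos psi0 by auto

lemma pinv_lt: assumes "0 \<le> s" "s < bigL h \<sigma>" shows "pinv s < \<sigma>"
proof -
  have "pinv s \<in> {0..\<sigma>}" using pinv_in assms by auto
  moreover have "pinv s \<noteq> \<sigma>" using psi_pinv[of s] assms unfolding bigL_def by auto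
  ultimately show ?thesis by auto
qed

lemma pinv_gt: assumes "0 < s" "s \<le> bigL h \<sigma>" shows "pinv s > 0"
proof -
  have "pinv s \<in> {0..\<sigma>}" using pinv_in assms by auto
  moreover have "pinv s \<noteq> 0" using psi_pinv[of s] assms psi0 by auto
  ultimately show ?thesis by auto
qed

lemma pinv_mono: assumes "0 \<le> s" "s \<le> t" "t \<le> bigL h \<sigma>" shows "pinv s \<le> pinv t"
proof (rule ccontr)
  assume "\<not> pinv s \<le> pinv t"
  then have "psi h (pinv t) < psi h (pinv s)"
    using psi_strict[of "pinv t" "pinv s"] pinv_in[of s] pinv_in[of t] assms by auto
  then show False using psi_pinv[of s] psi_pinv[of t] assms by auto
qed

lemma pinv_cont: "continuous_on {0..bigL h \<sigma>} pinv"
  using continuous_on_inv[OF psi_cont, where g=pinv] pinv_psi psi_image by auto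

lemma pinv_deriv: assumes "0 < s" "s < bigL h \<sigma>"
  shows "(pinv has_real_derivative exp (bigH h (pinv s))) (at s)"
proof -
  have "(pinv has_real_derivative inverse (exp (- bigH h (pinv s)))) (at s)"
  proof (rule DERIV_inverse_function[where f="psi h" and a=0 and b="bigL h \<sigma>"])
    show "(psi h has_real_derivative exp (- bigH h (pinv s))) (at (pinv s))"
      by (rule psi_deriv) (use pinv_gt pinv_lt assms in auto)
    show "isCont pinv s"
      using continuous_on_interior[OF pinv_cont, of s] assms by auto
  qed (use assms psi_pinv in auto)
  then show ?thesis by (simp add: exp_minus)
qed

lemma g_eq: "0 \<le> s \<Longrightarrow> s < bigL h \<sigma> \<Longrightarrow> gfun h \<sigma> s = exp (- bigH h (pinv s))"
  unfolding gfun_def by auto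

lemma g_L: "gfun h \<sigma> (bigL h \<sigma>) = 0"
  unfolding gfun_def by auto

lemma g_0: "gfun h \<sigma> 0 = 1"
  using g_eq[of 0] L_pos pinv_0 H0 by simp

lemma g_nonneg: "gfun h \<sigma> s \<ge> 0"
  unfolding gfun_def by auto

lemma g_le1: assumes "0 \<le> s" "s \<le> bigL h \<sigma>" shows "gfun h \<sigma> s \<le> 1"
proof (cases "s = bigL h \<sigma>")
  case True then show ?thesis using g_L by simp
next
  case False
  then have "s < bigL h \<sigma>" using assms by auto
  then have "bigH h (pinv s) \<ge> 0" using H_nonneg pinv_in[of s] pinv_lt[of s] assms by auto
  then show ?thesis using g_eq[of s] assms \<open>s < bigL h \<sigma>\<close> by simp
qed

lemma g_anti: assumes "0 \<le> x" "x \<le> y" "y \<le> bigL h \<sigma>"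
  shows "gfun h \<sigma> y \<le> gfun h \<sigma> x"
proof (cases "y = bigL h \<sigma>")
  case True then show ?thesis using g_L g_nonneg by simp
next
  case False
  then have "y < bigL h \<sigma>" using assms by auto
  moreover have "bigH h (pinv x) \<le> bigH h (pinv y)"
  proof -
    have a1: "0 \<le> pinv x" using pinv_in[of x] assms by auto
    have a2: "pinv x \<le> pinv y" by (rule pinv_mono) (use assms in auto)
    have a3: "pinv y < \<sigma>" by (rule pinv_lt) (use assms \<open>y < bigL h \<sigma>\<close> in auto)
    show ?thesis by (rule H_incr(1)[OF a1 a2 a3])
  qed
  moreover have "gfun h \<sigma> x = exp (- bigH h (pinv x))"
    by (rule g_eq) (use assms \<open>y < bigL h \<sigma>\<close> in auto)
  moreover have "gfun h \<sigma> y = exp (- bigH h (pinv y))"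
    by (rule g_eq) (use assms \<open>y < bigL h \<sigma>\<close> in auto)
  ultimately show ?thesis by simp
qed

lemma g_deriv: assumes "0 < s" "s < bigL h \<sigma>"
  shows "(gfun h \<sigma> has_real_derivative - h (pinv s)) (at s)"
proof -
  have p: "0 < pinv s" "pinv s < \<sigma>" using pinv_gt pinv_lt assms by auto
  have d1: "((\<lambda>s. bigH h (pinv s)) has_real_derivative h (pinv s) * exp (bigH h (pinv s))) (at s)"
    by (rule DERIV_chain2[OF H_deriv[OF p] pinv_deriv[OF assms]])
  have d2: "((\<lambda>s. exp (- bigH h (pinv s))) has_real_derivative
      exp (- bigH h (pinv s)) * - (h (pinv s) * exp (bigH h (pinv s)))) (at s)"
    by (rule DERIV_chain2[OF DERIV_exp DERIV_minus[OF d1]])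
  have eq: "exp (- bigH h (pinv s)) * - (h (pinv s) * exp (bigH h (pinv s))) = - h (pinv s)"
    by (simp add: exp_minus field_simps)
  show ?thesis
  proof (rule has_field_derivative_transform_within_open[where S="{0<..<bigL h \<sigma>}"])
    show "((\<lambda>s. exp (- bigH h (pinv s))) has_real_derivative - h (pinv s)) (at s)"
      using d2 unfolding eq .
  qed (use assms g_eq in auto)
qed

lemma pinv_tendsto: "filterlim pinv (at_left \<sigma>) (at_left (bigL h \<sigma>))"
proof (rule tendsto_imp_filterlim_at_left)
  have "(pinv \<longlongrightarrow> pinv (bigL h \<sigma>)) (at (bigL h \<sigma>) within {0..bigL h \<sigma>})"
  proof -
    have "bigL h \<sigma> \<in> {0..bigL h \<sigma>}" using L_pos by auto
    then show ?thesis using pinv_cont unfolding continuous_on_def by blast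
  qed
  moreover have "at (bigL h \<sigma>) within {0..bigL h \<sigma>} = at (bigL h \<sigma>) within {..<bigL h \<sigma>}"
    by (rule at_within_nhd[where S="{0<..}"]) (use L_pos in auto)
  ultimately show "(pinv \<longlongrightarrow> \<sigma>) (at_left (bigL h \<sigma>))" using pinv_L by simp
  have "eventually (\<lambda>x. 0 < x) (at_left (bigL h \<sigma>))"
    using eventually_at_left_real[OF L_pos] by (rule eventually_mono) auto
  moreover have "eventually (\<lambda>x. x < bigL h \<sigma>) (at_left (bigL h \<sigma>))"
    using eventually_at_left_real[OF L_pos] by (rule eventually_mono) auto
  ultimately show "eventually (\<lambda>x. pinv x < \<sigma>) (at_left (bigL h \<sigma>))"
    by eventually_elim (rule pinv_lt, auto)
qed


lemma deriv_lim: assumes h_infty: "filterlim h at_top (at_left \<sigma>)"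
  shows "filterlim (deriv (gfun h \<sigma>)) at_bot (at_left (bigL h \<sigma>))"
proof -
  have "filterlim (\<lambda>s. h (pinv s)) at_top (at_left (bigL h \<sigma>))"
    by (rule filterlim_compose[OF h_infty pinv_tendsto])
  then have lim: "filterlim (\<lambda>s. - h (pinv s)) at_bot (at_left (bigL h \<sigma>))"
    using filterlim_uminus_at_top[of "\<lambda>s. h (pinv s)"] by simp
  have ev: "eventually (\<lambda>s. - h (pinv s) = deriv (gfun h \<sigma>) s) (at_left (bigL h \<sigma>))"
    using eventually_at_left_real[OF L_pos]
  proof (rule eventually_mono)
    fix s assume "s \<in> {0<..<bigL h \<sigma>}"
    then have "(gfun h \<sigma> has_real_derivative - h (pinv s)) (at s)" using g_deriv by auto
    then show "- h (pinv s) = deriv (gfun h \<sigma>) s" by (rule DERIV_imp_deriv[symmetric])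
  qed
  show ?thesis using filterlim_cong[OF refl refl ev] lim by simp
qed

lemma g_isCont: "0 < s \<Longrightarrow> s < bigL h \<sigma> \<Longrightarrow> isCont (gfun h \<sigma>) s"
  using g_deriv DERIV_isCont by blast

lemma g_int: "gfun h \<sigma> integrable_on {0..bigL h \<sigma>}"
proof -
  have "gfun h \<sigma> integrable_on {0<..<bigL h \<sigma>}"
  proof (rule measurable_bounded_by_integrable_imp_integrable_real)
    show "gfun h \<sigma> \<in> borel_measurable (lebesgue_on {0<..<bigL h \<sigma>})"
      by (rule continuous_imp_measurable_on_sets_lebesgue)
         (auto intro!: continuous_at_imp_continuous_on g_isCont)
    show "(\<lambda>t. 1::real) integrable_on {0<..<bigL h \<sigma>}"
      using integrable_on_open_interval_real by blast
    show "\<bar>gfun h \<sigma> x\<bar> \<le> 1" if "x \<in> {0<..<bigL h \<sigma>}" for x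
      using g_le1[of x] g_nonneg[of x] that by auto
  qed auto
  then show ?thesis using integrable_on_open_interval_real by blast
qed

lemma G_lower: assumes "0 \<le> v" "v \<le> w" "w < \<sigma>"
  shows "integral {psi h v..bigL h \<sigma>} (gfun h \<sigma>) \<ge> (w - v) * exp (- bigH h w) * exp (- bigH h w)"
proof -
  define t where "t = psi h v"
  define t' where "t' = psi h w"
  have t0: "0 \<le> t" using psi_mono[of 0 v] psi0 assms t_def by auto
  have tt: "t \<le> t'" using psi_mono[of v w] assms t_def t'_def by auto
  have tL: "t' < bigL h \<sigma>" using psi_strict[of w \<sigma>] assms t'_def unfolding bigL_def by auto
  have i: "gfun h \<sigma> integrable_on {t..bigL h \<sigma>}"
    by (rule integrable_on_subinterval[OF g_int]) (use t0 in auto)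
  have split: "integral {t..t'} (gfun h \<sigma>) + integral {t'..bigL h \<sigma>} (gfun h \<sigma>) = integral {t..bigL h \<sigma>} (gfun h \<sigma>)"
    by (rule Henstock_Kurzweil_Integration.integral_combine[OF tt _ i]) (use tL in auto)
  have nn: "integral {t'..bigL h \<sigma>} (gfun h \<sigma>) \<ge> 0"
    by (rule integral_nonneg[OF integrable_on_subinterval[OF i]]) (use tt tL g_nonneg in auto)
  have "integral {t..t'} (\<lambda>x. gfun h \<sigma> t') \<le> integral {t..t'} (gfun h \<sigma>)"
  proof (rule integral_le)
    show "gfun h \<sigma> integrable_on {t..t'}" by (rule integrable_on_subinterval[OF i]) (use tL in auto)
    show "gfun h \<sigma> t' \<le> gfun h \<sigma> x" if "x \<in> {t..t'}" for x
      by (rule g_anti) (use that t0 tL in auto)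
  qed auto
  then have lo: "(t' - t) * gfun h \<sigma> t' \<le> integral {t..t'} (gfun h \<sigma>)" using tt by simp
  have gt: "gfun h \<sigma> t' = exp (- bigH h w)"
    using g_eq[of t'] tL t0 tt pinv_psi[of w] assms t'_def by auto
  have "t' - t \<ge> (w - v) * exp (- bigH h w)" using psi_lower[OF assms] t_def t'_def by simp
  then have "(w - v) * exp (- bigH h w) * exp (- bigH h w) \<le> (t' - t) * gfun h \<sigma> t'"
    unfolding gt by (rule mult_right_mono) simp
  then show ?thesis unfolding t_def[symmetric] using lo split nn by linarith
qed

lemma G_pos: assumes "0 \<le> t" "t < bigL h \<sigma>" shows "integral {t..bigL h \<sigma>} (gfun h \<sigma>) > 0"
proof -
  define v where "v = pinv t"
  have v: "0 \<le> v" "v < \<sigma>" using pinv_in[of t] pinv_lt[of t] assms v_def by auto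
  have "integral {psi h v..bigL h \<sigma>} (gfun h \<sigma>) \<ge> ((v + \<sigma>)/2 - v) * exp (- bigH h ((v + \<sigma>)/2)) * exp (- bigH h ((v + \<sigma>)/2))"
    by (rule G_lower) (use v in auto)
  moreover have "((v + \<sigma>)/2 - v) * exp (- bigH h ((v + \<sigma>)/2)) * exp (- bigH h ((v + \<sigma>)/2)) > 0"
    using v by auto
  moreover have "psi h v = t" using psi_pinv[of t] assms v_def by auto
  ultimately show ?thesis by auto
qed

lemma F_near:
  fixes \<gamma> M b d0 v :: real
  assumes gam: "1 \<le> \<gamma>" "\<gamma> < 2" and M: "M > 0" and b: "b < \<sigma>"
    and hb: "\<And>s. b < s \<Longrightarrow> s < \<sigma> \<Longrightarrow> (\<sigma> - s) powr \<gamma> * h s \<le> M"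
    and d0: "d0 = min (min (\<sigma> - b) 1) \<sigma> / 2"
    and v: "\<sigma> - d0 \<le> v" "v < \<sigma>"
  shows "1 / sqrt (integral {psi h v..bigL h \<sigma>} (gfun h \<sigma>))
      \<le> sqrt 2 * exp (2 * M) * (\<sigma> - v) powr (- \<gamma> / 2) * exp (bigH h v)"
proof -
  define d where "d = \<sigma> - v"
  have mm: "min (min (\<sigma> - b) 1) \<sigma> \<le> \<sigma> - b" "min (min (\<sigma> - b) 1) \<sigma> \<le> 1"
    "min (min (\<sigma> - b) 1) \<sigma> \<le> \<sigma>" "min (min (\<sigma> - b) 1) \<sigma> > 0" using b sigma_pos by auto
  have d: "0 < d" "d \<le> 1/2" "d < \<sigma> - b" "0 < v"
    using v d0 mm unfolding d_def by linarith+
  define \<delta> where "\<delta> = d powr \<gamma> / 2"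
  define w where "w = v + \<delta>"
  have dg: "d powr \<gamma> \<le> d"
    using powr_mono'[of 1 \<gamma> d] gam d by (simp add: powr_one)
  have dpos: "d powr \<gamma> > 0" using d by simp
  have del: "0 < \<delta>" "\<delta> \<le> d / 2" using dg dpos unfolding \<delta>_def by linarith+
  have sw: "\<sigma> - w \<ge> d / 2" "\<sigma> - w \<le> d" using del w_def d_def by auto
  have w: "b < w" "w < \<sigma>" "0 \<le> v" "v \<le> w" using sw d del w_def by auto
  have hw: "(\<sigma> - w) powr \<gamma> * h w \<le> M" using hb w by auto
  have "(d / 2) powr \<gamma> \<le> (\<sigma> - w) powr \<gamma>"
    by (rule powr_mono2) (use gam d sw in auto)
  moreover have "(d / 2) powr \<gamma> = d powr \<gamma> / 2 powr \<gamma>" by (rule powr_divide)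
  moreover have "2 powr \<gamma> \<le> 2 powr (2::real)"
    by (rule powr_mono) (use gam in auto)
  moreover have "2 powr (2::real) = 4"
    by (simp add: powr_numeral)
  ultimately have a: "d powr \<gamma> / 2 powr \<gamma> \<le> (\<sigma> - w) powr \<gamma>" and b4: "2 powr \<gamma> \<le> 4"
    by auto
  have "d powr \<gamma> / 4 \<le> d powr \<gamma> / 2 powr \<gamma>"
    by (rule divide_left_mono) (use b4 dpos in auto)
  with a have c: "d powr \<gamma> / 4 \<le> (\<sigma> - w) powr \<gamma>" by linarith
  have hwp: "h w > 0" using h_pos'[of w] w by auto
  have "d powr \<gamma> / 4 * h w \<le> (\<sigma> - w) powr \<gamma> * h w"
    by (rule mult_right_mono[OF c]) (use hwp in auto)
  then have "d powr \<gamma> / 4 * h w \<le> M" using hw by linarith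
  then have hw': "\<delta> * h w \<le> 2 * M" unfolding \<delta>_def by simp
  have "bigH h w - bigH h v \<le> (w - v) * h w" using H_incr(2)[of v w] w by auto
  then have Hw: "bigH h w \<le> bigH h v + 2 * M" using hw' w_def by simp
  define E where "E = exp (- bigH h v - 2 * M)"
  have E: "E > 0" "E \<le> exp (- bigH h w)" using Hw E_def by auto
  have "integral {psi h v..bigL h \<sigma>} (gfun h \<sigma>) \<ge> (w - v) * exp (- bigH h w) * exp (- bigH h w)"
    by (rule G_lower) (use w in auto)
  moreover have "(w - v) * exp (- bigH h w) * exp (- bigH h w) \<ge> \<delta> * E * E"
    using E del w_def by (simp add: mult_mono)
  ultimately have G: "integral {psi h v..bigL h \<sigma>} (gfun h \<sigma>) \<ge> \<delta> * E * E" by linarith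
  have X: "\<delta> * E * E > 0" using E del by simp
  have "sqrt (\<delta> * E * E) \<le> sqrt (integral {psi h v..bigL h \<sigma>} (gfun h \<sigma>))"
    using G by simp
  then have "1 / sqrt (integral {psi h v..bigL h \<sigma>} (gfun h \<sigma>)) \<le> 1 / sqrt (\<delta> * E * E)"
    using X by (intro divide_left_mono) auto
  also have "sqrt (\<delta> * E * E) = sqrt \<delta> * E" using E del by (simp add: real_sqrt_mult)
  also have "sqrt \<delta> = d powr (\<gamma> / 2) / sqrt 2"
    unfolding \<delta>_def using d by (simp add: powr_half_sqrt_powr real_sqrt_divide)
  also have "1 / (d powr (\<gamma> / 2) / sqrt 2 * E) = sqrt 2 * exp (2 * M) * d powr (- \<gamma> / 2) * exp (bigH h v)"
    unfolding E_def using d by (simp add: powr_minus_divide exp_diff exp_minus field_simps)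
  finally show ?thesis unfolding d_def .
qed

lemma F_int:
  fixes \<gamma> M b :: real
  assumes gam: "1 \<le> \<gamma>" "\<gamma> < 2" and M: "M > 0" and b: "b < \<sigma>"
    and hb: "\<And>s. b < s \<Longrightarrow> s < \<sigma> \<Longrightarrow> (\<sigma> - s) powr \<gamma> * h s \<le> M"
  shows "(\<lambda>t. 1 / sqrt (integral {t..bigL h \<sigma>} (gfun h \<sigma>))) integrable_on {0..bigL h \<sigma>}"
proof -
  define L where "L = bigL h \<sigma>"
  define G where "G t = integral {t..L} (gfun h \<sigma>)" for t
  define F where "F t = 1 / sqrt (G t)" for t
  define d0 where "d0 = min (min (\<sigma> - b) 1) \<sigma> / 2"
  define v0 where "v0 = \<sigma> - d0"
  define t0 where "t0 = psi h v0"
  have mm: "min (min (\<sigma> - b) 1) \<sigma> \<le> \<sigma>" "min (min (\<sigma> - b) 1) \<sigma> > 0" using b sigma_pos by auto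
  have aux: "\<And>m::real. m \<le> \<sigma> \<Longrightarrow> 0 < m \<Longrightarrow> 0 < \<sigma> - m / 2 \<and> \<sigma> - m / 2 < \<sigma>" by linarith
  have v01: "0 < v0" and v02: "v0 < \<sigma>" unfolding v0_def d0_def using aux[OF mm] by auto
  note v0 = v01 v02
  have t0: "0 < t0" "t0 < L"
    using psi_strict[of 0 v0] psi_strict[of v0 \<sigma>] v0 psi0 unfolding t0_def L_def bigL_def by auto
  have pt0: "pinv t0 = v0" using pinv_psi[of v0] v0 t0_def by auto
  have Lpos: "L > 0" using L_pos L_def by simp
  have Gpos: "0 \<le> t \<Longrightarrow> t < L \<Longrightarrow> G t > 0" for t using G_pos unfolding G_def L_def by auto
  have Fnn: "F t \<ge> 0" if "0 \<le> t" for t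
  proof -
    have "G t \<ge> 0" unfolding G_def
    proof (cases "t \<le> L")
      case True
      show "integral {t..L} (gfun h \<sigma>) \<ge> 0"
        by (rule integral_nonneg[OF integrable_on_subinterval[OF g_int]]) (use that True g_nonneg in \<open>auto simp: L_def\<close>)
    qed simp
    then show ?thesis unfolding F_def by simp
  qed
  define e where "e = 1 - \<gamma> / 2"
  have e: "e > 0" "e - 1 = - \<gamma> / 2" using gam e_def by auto
  define K1 where "K1 = sqrt 2 * exp (2 * M)"
  define K2 where "K2 = F t0 * \<sigma> powr (\<gamma> / 2)"
  define K where "K = max K1 K2"
  define \<Phi> where "\<Phi> t = K * (\<sigma> - pinv t) powr (- \<gamma> / 2) * exp (bigH h (pinv t))" for t
  define \<Psi> where "\<Psi> t = (- K / e) * (\<sigma> - pinv t) powr e" for t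
  have Kpos: "K > 0" unfolding K_def K1_def by (simp add: less_max_iff_disj)
  have bound: "\<bar>F t\<bar> \<le> \<Phi> t" if t: "t \<in> {0<..<L}" for t
  proof -
    define v where "v = pinv t"
    have v: "0 < v" "v < \<sigma>" using pinv_gt[of t] pinv_lt[of t] t unfolding v_def L_def by auto
    have pv: "psi h v = t" using psi_pinv[of t] t unfolding v_def L_def by auto
    have Hv: "bigH h v \<ge> 0" using H_nonneg v by auto
    show ?thesis
    proof (cases "t0 \<le> t")
      case True
      have "v0 \<le> v" using pinv_mono[of t0 t] t0 t True pt0 unfolding v_def L_def by auto
      then have "\<sigma> - d0 \<le> v" unfolding v0_def .
      from F_near[OF gam M b hb d0_def this v(2)]
      have "F t \<le> K1 * (\<sigma> - v) powr (- \<gamma> / 2) * exp (bigH h v)"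
        unfolding F_def G_def K1_def L_def pv by simp
      also have "\<dots> \<le> K * (\<sigma> - v) powr (- \<gamma> / 2) * exp (bigH h v)"
        by (intro mult_right_mono) (auto simp: K_def)
      finally show ?thesis using Fnn[of t] t unfolding \<Phi>_def v_def by simp
    next
      case False
      have i: "gfun h \<sigma> integrable_on {t..L}"
        by (rule integrable_on_subinterval[OF g_int]) (use t in \<open>auto simp: L_def\<close>)
      have "integral {t..t0} (gfun h \<sigma>) + integral {t0..L} (gfun h \<sigma>) = G t"
        unfolding G_def by (rule Henstock_Kurzweil_Integration.integral_combine[OF _ _ i]) (use False t0 in auto)
      moreover have "integral {t..t0} (gfun h \<sigma>) \<ge> 0"
        by (rule integral_nonneg[OF integrable_on_subinterval[OF i]]) (use False t0 g_nonneg in auto)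
      ultimately have "G t0 \<le> G t" unfolding G_def by linarith
      then have Ft: "F t \<le> F t0" unfolding F_def using Gpos[of t0] t0
        by (intro divide_left_mono) auto
      have "F t0 = K2 * \<sigma> powr (- \<gamma> / 2)"
        unfolding K2_def using sigma_pos by (simp add: powr_minus_divide)
      also have "\<dots> \<le> K * \<sigma> powr (- \<gamma> / 2)"
        by (intro mult_right_mono) (auto simp: K_def)
      also have "\<dots> \<le> K * (\<sigma> - v) powr (- \<gamma> / 2)"
        by (intro mult_left_mono powr_mono2') (use v Kpos gam in auto)
      also have "\<dots> \<le> K * (\<sigma> - v) powr (- \<gamma> / 2) * exp (bigH h v)"
      proof -
        have "1 \<le> exp (bigH h v)" using Hv by simp
        moreover have "0 \<le> K * (\<sigma> - v) powr (- \<gamma> / 2)" using Kpos by simp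
        ultimately show ?thesis using mult_left_mono by fastforce
      qed
      finally show ?thesis using Ft Fnn[of t] t unfolding \<Phi>_def v_def by simp
    qed
  qed
  have Psi_cont: "continuous_on {0..L} \<Psi>"
  proof -
    have c1: "continuous_on {0..L} (\<lambda>t. \<sigma> - pinv t)"
      using pinv_cont unfolding L_def by (intro continuous_intros)
    have "continuous_on {0..L} (\<lambda>t. (\<sigma> - pinv t) powr e)"
      by (rule continuous_on_powr'[OF c1 continuous_on_const])
         (use pinv_in e in \<open>auto simp: L_def\<close>)
    then show ?thesis unfolding \<Psi>_def[abs_def] by (rule continuous_on_mult[OF continuous_on_const])
  qed
  have Psi_der: "(\<Psi> has_vector_derivative \<Phi> t) (at t)" if t: "t \<in> {0<..<L}" for t
  proof -
    have tt: "0 < t" "t < bigL h \<sigma>" using t L_def by auto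
    have u: "\<sigma> - pinv t > 0" using pinv_lt[of t] tt by auto
    have du: "((\<lambda>t. \<sigma> - pinv t) has_real_derivative - exp (bigH h (pinv t))) (at t)"
      using DERIV_diff[OF DERIV_const pinv_deriv[OF tt]] by simp
    have "((\<lambda>t. (\<sigma> - pinv t) powr e) has_real_derivative
        e * (\<sigma> - pinv t) powr (e - 1) * - exp (bigH h (pinv t))) (at t)"
      by (rule DERIV_chain2[OF has_real_derivative_powr[OF u] du])
    then have "(\<Psi> has_real_derivative (- K / e) * (e * (\<sigma> - pinv t) powr (e - 1) * - exp (bigH h (pinv t)))) (at t)"
      unfolding \<Psi>_def[abs_def] by (rule DERIV_cmult)
    moreover have "(- K / e) * (e * (\<sigma> - pinv t) powr (e - 1) * - exp (bigH h (pinv t))) = \<Phi> t"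
      unfolding \<Phi>_def e(2)[symmetric] using e by simp
    ultimately show ?thesis by (simp add: has_real_derivative_iff_has_vector_derivative)
  qed
  have "(\<Phi> has_integral (\<Psi> L - \<Psi> 0)) {0..L}"
    by (rule fundamental_theorem_of_calculus_interior[OF _ Psi_cont Psi_der]) (use Lpos in auto)
  then have Phi_int: "\<Phi> integrable_on {0<..<L}"
    using integrable_on_open_interval_real by blast
  have Gc: "continuous_on {0..L} G"
    unfolding G_def[abs_def] by (rule indefinite_integral_continuous_1'[OF g_int[folded L_def]])
  have Gc2: "continuous_on {0<..<L} G" by (rule continuous_on_subset[OF Gc]) auto
  have nz: "\<forall>t\<in>{0<..<L}. G t > 0" using Gpos by simp
  have Fc: "continuous_on {0<..<L} F"
    unfolding F_def[abs_def] by (intro continuous_intros Gc2) (use nz in force)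
  have "F integrable_on {0<..<L}"
  proof (rule measurable_bounded_by_integrable_imp_integrable_real[OF _ Phi_int])
    show "F \<in> borel_measurable (lebesgue_on {0<..<L})"
      by (rule continuous_imp_measurable_on_sets_lebesgue[OF Fc]) auto
  qed (use bound in auto)
  then show ?thesis using integrable_on_open_interval_real unfolding F_def G_def L_def by blast
qed

end

theorem lemma4p1:
  fixes h :: "real \<Rightarrow> real" and \<sigma> \<gamma> C :: real
  assumes sigma_pos: "\<sigma> > 0"
    and h_cont: "continuous_on {0..<\<sigma>} h"
    and h_pos: "\<forall>s\<in>{0..<\<sigma>}. h s > 0"
    and h_strict_mono: "strict_mono_on {0..<\<sigma>} h"
    and h_infty: "filterlim h at_top (at_left \<sigma>)"
    and gamma: "1 \<le> \<gamma>" "\<gamma> < 2"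
    and C_pos: "C > 0"
    and h_asymp: "((\<lambda>s. (\<sigma> - s) powr \<gamma> * h s) \<longlongrightarrow> C) (at_left \<sigma>)"
  shows "(gfun h \<sigma> 0 = 1 \<and> gfun h \<sigma> (bigL h \<sigma>) = 0)
    \<and> (\<forall>x\<in>{0..bigL h \<sigma>}. \<forall>y\<in>{0..bigL h \<sigma>}. x \<le> y \<longrightarrow> gfun h \<sigma> y \<le> gfun h \<sigma> x)
    \<and> ((\<forall>s\<in>{0<..<bigL h \<sigma>}. gfun h \<sigma> differentiable (at s))
         \<and> filterlim (deriv (gfun h \<sigma>)) at_bot (at_left (bigL h \<sigma>)))
    \<and> ((\<lambda>t. 1 / sqrt (integral {t..bigL h \<sigma>} (gfun h \<sigma>))) integrable_on {0..bigL h \<sigma>})"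
proof -
  interpret lemctx h \<sigma>
    by unfold_locales (use sigma_pos h_cont h_pos h_strict_mono in auto)
  have i: "gfun h \<sigma> 0 = 1 \<and> gfun h \<sigma> (bigL h \<sigma>) = 0" using g_0 g_L by simp
  have ii: "\<forall>x\<in>{0..bigL h \<sigma>}. \<forall>y\<in>{0..bigL h \<sigma>}. x \<le> y \<longrightarrow> gfun h \<sigma> y \<le> gfun h \<sigma> x"
    using g_anti by auto
  have iii1: "\<forall>s\<in>{0<..<bigL h \<sigma>}. gfun h \<sigma> differentiable (at s)"
    using g_deriv real_differentiable_def by fastforce
  have iii2: "filterlim (deriv (gfun h \<sigma>)) at_bot (at_left (bigL h \<sigma>))"
    by (rule deriv_lim[OF h_infty])
  have "eventually (\<lambda>s. (\<sigma> - s) powr \<gamma> * h s < 2 * C) (at_left \<sigma>)"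
    using order_tendstoD(2)[OF h_asymp] C_pos by simp
  then obtain b where b: "b < \<sigma>" and hb0: "\<And>y. b < y \<Longrightarrow> y < \<sigma> \<Longrightarrow> (\<sigma> - y) powr \<gamma> * h y < 2 * C"
    using eventually_at_left[of 0 \<sigma>] sigma_pos by auto
  have hb: "\<And>s. b < s \<Longrightarrow> s < \<sigma> \<Longrightarrow> (\<sigma> - s) powr \<gamma> * h s \<le> 2 * C"
    using hb0 less_imp_le by blast
  have iv: "(\<lambda>t. 1 / sqrt (integral {t..bigL h \<sigma>} (gfun h \<sigma>))) integrable_on {0..bigL h \<sigma>}"
    by (rule F_int[OF gamma _ b hb]) (use C_pos in simp)
  show ?thesis using i ii iii1 iii2 iv by blast
qed

end
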